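(* Let $(X,\rho)$ be a compact metric space with at least two points and let $T\colon X\to X$ be continuous and topologically weakly mixing. Then for every $d>1$ there is $\delta_d>0$ such that the set of $\delta_d$-Li-Yorke $d$-tuples is residual in $X^d$.
   Context: $T$ is topologically weakly mixing if $T\times T$ is topologically transitive on $X\times X$. A $d$-tuple is $\delta$-Li-Yorke if $\liminf_n\max_{i,j}\rho(T^nx_i,T^nx_j)=0$ and $\limsup_n\min_{i\ne j}\rho(T^nx_i,T^nx_j)>\delta$. Residual means containing a dense $G_\delta$ set. *)

theory Defs
  imports "HOL-Analysis.Analysis"
begin

definition top_transitive :: "'b topology \<Rightarrow> ('b \<Rightarrow> 'b) \<Rightarrow> bool" where
  "top_transitive Y S \<longleftrightarrow>
     (\<forall>U V. openin Y U \<and> openin Y V \<and> U \<noteq> {} \<and> V \<noteq> {} \<longrightarrow>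
        (\<exists>n\<ge>1. {p \<in> topspace Y. (S ^^ n) p \<in> U} \<inter> V \<noteq> {}))"

definition weakly_mixing :: "'a::metric_space set \<Rightarrow> ('a \<Rightarrow> 'a) \<Rightarrow> bool" where
  "weakly_mixing X T \<longleftrightarrow>
     top_transitive (prod_topology (top_of_set X) (top_of_set X)) (\<lambda>(x, y). (T x, T y))"

definition li_yorke_tuple :: "('a::metric_space \<Rightarrow> 'a) \<Rightarrow> nat \<Rightarrow> real \<Rightarrow> (nat \<Rightarrow> 'a) \<Rightarrow> bool" where
  "li_yorke_tuple T d \<delta> x \<longleftrightarrow>
     liminf (\<lambda>n. ereal (Max {dist ((T ^^ n) (x i)) ((T ^^ n) (x j)) | i j. i < d \<and> j < d})) = 0 \<and>
     limsup (\<lambda>n. ereal (Min {dist ((T ^^ n) (x i)) ((T ^^ n) (x j)) | i j. i < d \<and> j < d \<and> i \<noteq> j}))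
        > ereal \<delta>"

definition residual_in :: "'b topology \<Rightarrow> 'b set \<Rightarrow> bool" where
  "residual_in Y A \<longleftrightarrow> (\<exists>G. gdelta_in Y G \<and> Y closure_of G = topspace Y \<and> G \<subseteq> A)"

end

theory Submission
  imports Defs "HOL-Analysis.Analysis"
begin


lemma funpow_in: "T ` X \<subseteq> X \<Longrightarrow> x \<in> X \<Longrightarrow> (T ^^ n) x \<in> X"
  by (induction n) auto

lemma funpow_cont:
  assumes "continuous_on X T" "T ` X \<subseteq> X"
  shows "continuous_map (top_of_set X) (top_of_set X) (T ^^ n)"
proof (induction n)
  case 0 then show ?case by simp
next
  case (Suc n)
  have "continuous_map (top_of_set X) (top_of_set X) T" using assms by (auto simp: Pi_def)
  then show ?case unfolding funpow.simps by (rule continuous_map_compose[OF Suc])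
qed

lemma prod_pow: fixes T :: "'a \<Rightarrow> 'a" shows "((\<lambda>(x, y). (T x, T y)) ^^ n) (a, b) = ((T ^^ n) a, (T ^^ n) b)"
proof (induction n)
  case (Suc n) then show ?case by simp
qed simp

lemma wm_pair:
  assumes "weakly_mixing X T"
    and "openin (top_of_set X) U1" "openin (top_of_set X) U2"
    and "openin (top_of_set X) V1" "openin (top_of_set X) V2"
    and "U1 \<noteq> {}" "U2 \<noteq> {}" "V1 \<noteq> {}" "V2 \<noteq> {}"
  shows "\<exists>n\<ge>1. (\<exists>v\<in>V1. (T ^^ n) v \<in> U1) \<and> (\<exists>v\<in>V2. (T ^^ n) v \<in> U2)"
proof -
  have "openin (prod_topology (top_of_set X) (top_of_set X)) (U1 \<times> U2)"
       "openin (prod_topology (top_of_set X) (top_of_set X)) (V1 \<times> V2)"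
    unfolding openin_prod_Times_iff using assms by blast+
  moreover have "U1 \<times> U2 \<noteq> {}" "V1 \<times> V2 \<noteq> {}" using assms by auto
  ultimately have "\<exists>n\<ge>1. {p \<in> topspace (prod_topology (top_of_set X) (top_of_set X)). ((\<lambda>(x, y). (T x, T y)) ^^ n) p \<in> U1 \<times> U2} \<inter> (V1 \<times> V2) \<noteq> {}"
    using assms(1) unfolding weakly_mixing_def top_transitive_def 
    apply -
    apply (drule spec[of _ "U1 \<times> U2"])
    apply (drule spec[of _ "V1 \<times> V2"])
    apply (erule mp)
    apply (intro conjI; assumption)
    done
  then obtain n where n: "n \<ge> 1"
    "{p \<in> topspace (prod_topology (top_of_set X) (top_of_set X)). ((\<lambda>(x, y). (T x, T y)) ^^ n) p \<in> U1 \<times> U2} \<inter> (V1 \<times> V2) \<noteq> {}"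
    by (elim exE conjE) (rule that)
  then obtain p where p: "p \<in> {p \<in> topspace (prod_topology (top_of_set X) (top_of_set X)). ((\<lambda>(x, y). (T x, T y)) ^^ n) p \<in> U1 \<times> U2}" "p \<in> V1 \<times> V2"
    by (meson disjoint_iff)
  obtain a b where ab: "p = (a, b)" by (cases p)
  have "((T ^^ n) a, (T ^^ n) b) \<in> U1 \<times> U2" using p(1) ab by (simp add: prod_pow)
  then have "(T ^^ n) a \<in> U1" "(T ^^ n) b \<in> U2" by auto
  moreover have "a \<in> V1" "b \<in> V2" using p(2) ab by auto
  ultimately show ?thesis using n(1) by blast
qed

context
  fixes X :: "'a::metric_space set" and T :: "'a \<Rightarrow> 'a"
  assumes cont: "continuous_on X T" and into: "T ` X \<subseteq> X" and wm: "weakly_mixing X T"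
    and Xne: "X \<noteq> {}" and cpt: "compact X"
begin

lemma open_pre:
  assumes "openin (top_of_set X) U"
  shows "openin (top_of_set X) {x \<in> X. (T ^^ m) x \<in> U}"
  using openin_continuous_map_preimage[OF funpow_cont[OF cont into, of m] assms] by simp

lemma combine:
  assumes "openin (top_of_set X) U" "openin (top_of_set X) V"
    "openin (top_of_set X) U'" "openin (top_of_set X) V'"
    "U \<noteq> {}" "V \<noteq> {}" "U' \<noteq> {}" "V' \<noteq> {}"
  shows "\<exists>A B. openin (top_of_set X) A \<and> openin (top_of_set X) B \<and> A \<noteq> {} \<and> B \<noteq> {} \<and>
     (\<forall>n. (\<exists>b\<in>B. (T ^^ n) b \<in> A) \<longrightarrow> (\<exists>b\<in>V. (T ^^ n) b \<in> U) \<and> (\<exists>b\<in>V'. (T ^^ n) b \<in> U'))"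
proof -
  obtain m where m: "\<exists>u\<in>U. (T ^^ m) u \<in> U'" "\<exists>v\<in>V. (T ^^ m) v \<in> V'"
    using wm_pair[OF wm assms(3,4,1,2) assms(7,8,5,6)] by blast
  define A where "A = {x \<in> X. (T ^^ m) x \<in> U'} \<inter> U"
  define B where "B = {x \<in> X. (T ^^ m) x \<in> V'} \<inter> V"
  have sU: "U \<subseteq> X" "V \<subseteq> X" using assms(1,2) openin_imp_subset by auto
  have oA: "openin (top_of_set X) A" unfolding A_def using open_pre assms by blast
  have oB: "openin (top_of_set X) B" unfolding B_def using open_pre assms by blast
  have nAB: "A \<noteq> {}" "B \<noteq> {}" using m sU unfolding A_def B_def by auto
  have key: "(\<exists>b\<in>V. (T ^^ n) b \<in> U) \<and> (\<exists>b\<in>V'. (T ^^ n) b \<in> U')"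
    if "b \<in> B" "(T ^^ n) b \<in> A" for n b
  proof -
    have "(T ^^ n) ((T ^^ m) b) = (T ^^ m) ((T ^^ n) b)"
    proof -
      have "T^^n \<circ> T^^m = T^^m \<circ> T^^n" by (simp add: funpow_add[symmetric] add.commute)
      from fun_cong[OF this, of b] show ?thesis by simp
    qed
    then have "(T ^^ m) b \<in> V'" "(T ^^ n) ((T ^^ m) b) \<in> U'" "b \<in> V" "(T ^^ n) b \<in> U"
      using that unfolding A_def B_def by auto
    then show ?thesis by blast
  qed
  have key': "\<forall>n. (\<exists>b\<in>B. (T ^^ n) b \<in> A) \<longrightarrow> (\<exists>b\<in>V. (T ^^ n) b \<in> U) \<and> (\<exists>b\<in>V'. (T ^^ n) b \<in> U')"
    using key by blast
  show ?thesis using oA oB nAB key' by blast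
qed

lemma multi:
  "\<forall>A B. (\<forall>i<(d::nat). openin (top_of_set X) (A i) \<and> openin (top_of_set X) (B i) \<and> A i \<noteq> {} \<and> B i \<noteq> {}) \<longrightarrow>
    (\<exists>A' B'. openin (top_of_set X) A' \<and> openin (top_of_set X) B' \<and> A' \<noteq> {} \<and> B' \<noteq> {} \<and>
     (\<forall>n. (\<exists>b\<in>B'. (T ^^ n) b \<in> A') \<longrightarrow> (\<forall>i<d. \<exists>b\<in>B i. (T ^^ n) b \<in> A i)))"
proof (induction d)
  case 0
  show ?case using Xne by (intro allI impI exI[of _ X]) auto
next
  case (Suc d)
  show ?case
  proof (intro allI impI)
    fix A B :: "nat \<Rightarrow> 'a set"
    assume h: "\<forall>i<Suc d. openin (top_of_set X) (A i) \<and> openin (top_of_set X) (B i) \<and> A i \<noteq> {} \<and> B i \<noteq> {}"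
    then have "\<forall>i<d. openin (top_of_set X) (A i) \<and> openin (top_of_set X) (B i) \<and> A i \<noteq> {} \<and> B i \<noteq> {}"
      by auto
    from Suc.IH[THEN spec[of _ A], THEN spec[of _ B], THEN mp, OF this] obtain A' B' where AB: "openin (top_of_set X) A'" "openin (top_of_set X) B'" "A' \<noteq> {}" "B' \<noteq> {}"
      "\<forall>n. (\<exists>b\<in>B'. (T ^^ n) b \<in> A') \<longrightarrow> (\<forall>i<d. \<exists>b\<in>B i. (T ^^ n) b \<in> A i)"
      by blast
    have hd: "openin (top_of_set X) (A d)" "openin (top_of_set X) (B d)" "A d \<noteq> {}" "B d \<noteq> {}"
      using h by auto
    obtain A'' B'' where AB2: "openin (top_of_set X) A''" "openin (top_of_set X) B''" "A'' \<noteq> {}" "B'' \<noteq> {}"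
      "\<forall>n. (\<exists>b\<in>B''. (T ^^ n) b \<in> A'') \<longrightarrow> (\<exists>b\<in>B'. (T ^^ n) b \<in> A') \<and> (\<exists>b\<in>B d. (T ^^ n) b \<in> A d)"
      using combine[OF AB(1,2) hd(1,2) AB(3,4) hd(3,4)] by blast
    show "\<exists>A' B'. openin (top_of_set X) A' \<and> openin (top_of_set X) B' \<and> A' \<noteq> {} \<and> B' \<noteq> {} \<and>
     (\<forall>n. (\<exists>b\<in>B'. (T ^^ n) b \<in> A') \<longrightarrow> (\<forall>i<Suc d. \<exists>b\<in>B i. (T ^^ n) b \<in> A i))"
    proof (intro exI conjI allI impI)
      fix n i assume hb: "\<exists>b\<in>B''. (T ^^ n) b \<in> A''" and "i < Suc d"
      then have "i < d \<or> i = d" by auto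
      then show "\<exists>b\<in>B i. (T ^^ n) b \<in> A i"
      proof
        assume "i < d" then show ?thesis using AB(5) AB2(5) hb by blast
      next
        assume "i = d" then show ?thesis using AB2(5) hb by blast
      qed
    qed (fact AB2)+
  qed
qed

lemma surj: "T ` X = X"
proof (rule ccontr)
  assume "T ` X \<noteq> X"
  then have ne: "X - T ` X \<noteq> {}" using into by auto
  have "compact (T ` X)" using compact_continuous_image cont cpt by blast
  then have "closed (T ` X)" by (simp add: compact_imp_closed)
  then have op: "openin (top_of_set X) (X - T ` X)"
    using openin_open_Int[of "- T ` X" X] by (simp add: open_Compl Diff_eq)
  have opX: "openin (top_of_set X) X" by simp
  have "X \<noteq> {}" using ne by auto
  then obtain n v where "n \<ge> 1" "v \<in> X" "(T ^^ n) v \<in> X - T ` X"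
    using wm_pair[OF wm op op opX opX ne ne] by blast
  moreover have "(T ^^ n) v = T ((T ^^ (n - 1)) v)" using \<open>n \<ge> 1\<close>
  proof -
    obtain k where "n = Suc k" using \<open>n \<ge> 1\<close> by (cases n) auto
    then show ?thesis by simp
  qed
  moreover have "(T ^^ (n - 1)) v \<in> X" using funpow_in[OF into \<open>v \<in> X\<close>] by blast
  ultimately show False by blast
qed


lemma surj_pow: "(T ^^ k) ` X = X"
proof (induction k)
  case (Suc k)
  have "(T ^^ Suc k) ` X = T ` ((T ^^ k) ` X)" by (simp add: image_comp)
  then show ?case using Suc surj by simp
qed simp

lemma large:
  assumes "openin (top_of_set X) A'" "openin (top_of_set X) B'" "A' \<noteq> {}" "B' \<noteq> {}"
  shows "\<exists>n\<ge>k. \<exists>b\<in>B'. (T ^^ n) b \<in> A'"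
proof -
  define A'' where "A'' = {x \<in> X. (T ^^ k) x \<in> A'}"
  have oA: "openin (top_of_set X) A''" unfolding A''_def by (rule open_pre[OF assms(1)])
  obtain a where a: "a \<in> A'" using assms(3) by blast
  then have "a \<in> X" using assms(1) openin_imp_subset by blast
  then obtain x where "x \<in> X" "(T ^^ k) x = a" using surj_pow[of k] by (metis imageE)
  then have nA: "A'' \<noteq> {}" unfolding A''_def using a by blast
  obtain n b where "n \<ge> 1" "b \<in> B'" "(T ^^ n) b \<in> A''"
    using wm_pair[OF wm oA oA assms(2) assms(2) nA nA assms(4) assms(4)] by blast
  then have "(T ^^ k) ((T ^^ n) b) \<in> A'" unfolding A''_def by blast
  moreover have "(T ^^ k) ((T ^^ n) b) = (T ^^ (k + n)) b" by (simp add: funpow_add)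
  ultimately show ?thesis using \<open>b \<in> B'\<close> by (intro exI[of _ "k + n"]) auto
qed

lemma keylemma:
  assumes "\<forall>i<(d::nat). openin (top_of_set X) (A i) \<and> openin (top_of_set X) (B i) \<and> A i \<noteq> {} \<and> B i \<noteq> {}"
  shows "\<exists>n\<ge>k. \<forall>i<d. \<exists>b\<in>B i. (T ^^ n) b \<in> A i"
proof -
  obtain A' B' where AB: "openin (top_of_set X) A'" "openin (top_of_set X) B'" "A' \<noteq> {}" "B' \<noteq> {}"
     "\<forall>n. (\<exists>b\<in>B'. (T ^^ n) b \<in> A') \<longrightarrow> (\<forall>i<d. \<exists>b\<in>B i. (T ^^ n) b \<in> A i)"
    using multi[THEN spec[of _ A], THEN spec[of _ B], THEN mp, OF assms] by blast
  obtain n where "n \<ge> k" "\<exists>b\<in>B'. (T ^^ n) b \<in> A'" using large[OF AB(1-4)] by blast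
  then show ?thesis using AB(5) by blast
qed

lemma dense_O:
  assumes "\<forall>i<(d::nat). openin (top_of_set X) (C i) \<and> C i \<noteq> {}"
  shows "(product_topology (\<lambda>_. top_of_set X) {..<d}) closure_of
     {x \<in> topspace (product_topology (\<lambda>_. top_of_set X) {..<d}). \<exists>n\<ge>k. \<forall>i<d. (T ^^ n) (x i) \<in> C i}
     = topspace (product_topology (\<lambda>_. top_of_set X) {..<d})"
  unfolding dense_intersects_open
proof (intro allI impI)
  fix W assume W: "openin (product_topology (\<lambda>_. top_of_set X) {..<d}) W \<and> W \<noteq> {}"
  then obtain x where "x \<in> W" by blast
  have "openin (product_topology (\<lambda>_. top_of_set X) {..<d}) W" using W by (rule conjunct1)
  then have "\<forall>x\<in>W. \<exists>U. finite {i \<in> {..<d}. U i \<noteq> topspace (top_of_set X)} \<and>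
                 (\<forall>i \<in> {..<d}. openin (top_of_set X) (U i)) \<and> x \<in> Pi\<^sub>E {..<d} U \<and> Pi\<^sub>E {..<d} U \<subseteq> W"
    by (simp only: openin_product_topology_alt)
  then have "\<exists>U. finite {i \<in> {..<d}. U i \<noteq> topspace (top_of_set X)} \<and>
                 (\<forall>i \<in> {..<d}. openin (top_of_set X) (U i)) \<and> x \<in> Pi\<^sub>E {..<d} U \<and> Pi\<^sub>E {..<d} U \<subseteq> W"
    using \<open>x \<in> W\<close> by (rule bspec)
  then obtain U where U: "\<forall>i\<in>{..<d}. openin (top_of_set X) (U i)" "x \<in> Pi\<^sub>E {..<d} U" "Pi\<^sub>E {..<d} U \<subseteq> W"
    by (elim exE conjE) (rule that)
  have Une: "U i \<noteq> {}" if "i < d" for i using U(2) that by (auto simp: PiE_iff)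
  have hh: "\<forall>i<d. openin (top_of_set X) (C i) \<and> openin (top_of_set X) (U i) \<and> C i \<noteq> {} \<and> U i \<noteq> {}"
    using assms U(1) Une by auto
  then obtain n where n: "n \<ge> k" "\<forall>i<d. \<exists>b\<in>U i. (T ^^ n) b \<in> C i"
    using keylemma[OF hh, of k] by (elim exE conjE) (rule that)
  then have "\<forall>i\<in>{..<d}. \<exists>b. b \<in> U i \<and> (T ^^ n) b \<in> C i" by auto
  then obtain f where f: "\<forall>i\<in>{..<d}. f i \<in> U i \<and> (T ^^ n) (f i) \<in> C i"
    by (metis (no_types, lifting) bchoice)
  define y where "y = restrict f {..<d}"
  have yP: "y \<in> Pi\<^sub>E {..<d} U" unfolding y_def using f by auto
  then have "y \<in> W" using U(3) by blast
  moreover have "y \<in> topspace (product_topology (\<lambda>_. top_of_set X) {..<d})"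
  proof -
    have "Pi\<^sub>E {..<d} U \<subseteq> Pi\<^sub>E {..<d} (\<lambda>_. X)"
      by (rule PiE_mono) (use U(1) openin_imp_subset in blast)
    then have "y \<in> Pi\<^sub>E {..<d} (\<lambda>_. X)" using yP by (rule subsetD)
    then show ?thesis by simp
  qed
  moreover have "\<forall>i<d. (T ^^ n) (y i) \<in> C i" unfolding y_def using f by auto
  ultimately show "{x \<in> topspace (product_topology (\<lambda>_. top_of_set X) {..<d}). \<exists>n\<ge>k. \<forall>i<d. (T ^^ n) (x i) \<in> C i} \<inter> W \<noteq> {}"
    using n(1) by blast
qed

end

lemma openin_all_fin:
  assumes "finite I" "\<And>i. i \<in> I \<Longrightarrow> openin Y {x \<in> topspace Y. g i x \<in> C i}"
  shows "openin Y {x \<in> topspace Y. \<forall>i\<in>I. g i x \<in> C i}"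
  using assms
proof (induction I rule: finite_induct)
  case empty then show ?case by simp
next
  case (insert j F)
  have "{x \<in> topspace Y. \<forall>i\<in>insert j F. g i x \<in> C i} =
        {x \<in> topspace Y. g j x \<in> C j} \<inter> {x \<in> topspace Y. \<forall>i\<in>F. g i x \<in> C i}" by auto
  have o1: "openin Y {x \<in> topspace Y. g j x \<in> C j}" using insert.prems by simp
  have o2: "openin Y {x \<in> topspace Y. \<forall>i\<in>F. g i x \<in> C i}" using insert.IH insert.prems by simp
  show ?case unfolding \<open>{x \<in> topspace Y. \<forall>i\<in>insert j F. g i x \<in> C i} = _\<close> using o1 o2 by (rule openin_Int)
qed

lemma open_O:
  assumes cont: "continuous_on X T" and into: "T ` X \<subseteq> X"
    and "\<forall>i<(d::nat). openin (top_of_set X) (C i)"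
  shows "openin (product_topology (\<lambda>_. top_of_set X) {..<d})
     {x \<in> topspace (product_topology (\<lambda>_. top_of_set X) {..<d}). \<exists>n\<ge>k. \<forall>i<d. (T ^^ n) (x i) \<in> C i}"
proof -
  let ?P = "product_topology (\<lambda>_. top_of_set X) {..<d}"
  have eq: "{x \<in> topspace ?P. \<exists>n\<ge>k. \<forall>i<d. (T ^^ n) (x i) \<in> C i} =
     \<Union> ((\<lambda>n. {x \<in> topspace ?P. \<forall>i\<in>{..<d}. (T ^^ n) (x i) \<in> C i}) ` {k..})" by auto
  have op: "openin ?P {x \<in> topspace ?P. \<forall>i\<in>{..<d}. (T ^^ n) (x i) \<in> C i}" for n
  proof (rule openin_all_fin)
    fix i assume "i \<in> {..<d}"
    have "continuous_map ?P (top_of_set X) ((T ^^ n) \<circ> (\<lambda>x. x i))"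
      by (rule continuous_map_compose[OF continuous_map_product_projection[OF \<open>i \<in> {..<d}\<close>] funpow_cont[OF cont into]])
    from openin_continuous_map_preimage[OF this, of "C i"]
    show "openin ?P {x \<in> topspace ?P. (T ^^ n) (x i) \<in> C i}" using assms(3) \<open>i \<in> {..<d}\<close> by simp
  qed simp
  show ?thesis unfolding eq
  proof (rule openin_Union)
    fix S assume "S \<in> (\<lambda>n. {x \<in> topspace ?P. \<forall>i\<in>{..<d}. (T ^^ n) (x i) \<in> C i}) ` {k..}"
    then obtain n where "S = {x \<in> topspace ?P. \<forall>i\<in>{..<d}. (T ^^ n) (x i) \<in> C i}" by blast
    then show "openin ?P S" using op[of n] by simp
  qed
qed


lemma set_img2: "{f i j | i j. i < (d::nat) \<and> j < d} = (\<lambda>(i, j). f i j) ` ({..<d} \<times> {..<d})"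
  by auto

lemma set_img3: "{f i j | i j. i < (d::nat) \<and> j < d \<and> i \<noteq> j} = (\<lambda>(i, j). f i j) ` {(i, j). i < d \<and> j < d \<and> i \<noteq> j}"
  by auto

lemma fin3: "finite {(i, j). i < (d::nat) \<and> j < d \<and> i \<noteq> j}"
  by (rule finite_subset[of _ "{..<d} \<times> {..<d}"]) auto

lemma ly:
  fixes x :: "nat \<Rightarrow> 'a::metric_space" and T :: "'a \<Rightarrow> 'a"
  assumes d: "d > 1" and dp: "\<delta> > 0"
    and h1: "\<And>k. \<exists>n\<ge>k. \<forall>i<d. \<forall>j<d. dist ((T^^n) (x i)) ((T^^n) (x j)) < 1 / (real k + 1)"
    and h2: "\<And>k. \<exists>n\<ge>k. \<forall>i<d. \<forall>j<d. i \<noteq> j \<longrightarrow> dist ((T^^n) (x i)) ((T^^n) (x j)) > 2 * \<delta>"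
  shows "li_yorke_tuple T d \<delta> x"
proof -
  define f where "f n = ereal (Max {dist ((T ^^ n) (x i)) ((T ^^ n) (x j)) | i j. i < d \<and> j < d})" for n
  define g where "g n = ereal (Min {dist ((T ^^ n) (x i)) ((T ^^ n) (x j)) | i j. i < d \<and> j < d \<and> i \<noteq> j})" for n
  have Mx: "Max {dist ((T ^^ n) (x i)) ((T ^^ n) (x j)) | i j. i < d \<and> j < d} =
      Max ((\<lambda>(i, j). dist ((T ^^ n) (x i)) ((T ^^ n) (x j))) ` ({..<d} \<times> {..<d}))" for n
    by (simp only: set_img2)
  have Mn: "Min {dist ((T ^^ n) (x i)) ((T ^^ n) (x j)) | i j. i < d \<and> j < d \<and> i \<noteq> j} =
      Min ((\<lambda>(i, j). dist ((T ^^ n) (x i)) ((T ^^ n) (x j))) ` {(i, j). i < d \<and> j < d \<and> i \<noteq> j})" for n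
    by (simp only: set_img3)
  have d0: "(0::nat, 0::nat) \<in> {..<d} \<times> {..<d}" using d by auto
  have d01: "(0::nat, 1::nat) \<in> {(i, j). i < d \<and> j < d \<and> i \<noteq> j}" using d by auto
  have fpos: "0 \<le> f n" for n
  proof -
    have "0 \<in> (\<lambda>(i, j). dist ((T ^^ n) (x i)) ((T ^^ n) (x j))) ` ({..<d} \<times> {..<d})"
      using d0 by force
    then have "0 \<le> Max ((\<lambda>(i, j). dist ((T ^^ n) (x i)) ((T ^^ n) (x j))) ` ({..<d} \<times> {..<d}))"
      by (intro Max_ge) auto
    then show ?thesis unfolding f_def Mx by simp
  qed
  have fsmall: "f n < ereal (1 / (real k + 1))"
    if "\<forall>i<d. \<forall>j<d. dist ((T^^n) (x i)) ((T^^n) (x j)) < 1 / (real k + 1)" for n k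
  proof -
    have "Max ((\<lambda>(i, j). dist ((T ^^ n) (x i)) ((T ^^ n) (x j))) ` ({..<d} \<times> {..<d})) < 1 / (real k + 1)"
      using d0 that by (subst Max_less_iff) auto
    then show ?thesis unfolding f_def Mx by simp
  qed
  have glarge: "g n > ereal (2 * \<delta>)"
    if "\<forall>i<d. \<forall>j<d. i \<noteq> j \<longrightarrow> dist ((T^^n) (x i)) ((T^^n) (x j)) > 2 * \<delta>" for n
  proof -
    have "Min ((\<lambda>(i, j). dist ((T ^^ n) (x i)) ((T ^^ n) (x j))) ` {(i, j). i < d \<and> j < d \<and> i \<noteq> j}) > 2 * \<delta>"
      using d01 that fin3 by (subst Min_gr_iff) auto
    then show ?thesis unfolding g_def Mn by simp
  qed
  have l1: "liminf f = 0"
  proof (rule antisym)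
    show "0 \<le> liminf f" by (rule Liminf_bounded) (simp add: fpos)
    show "liminf f \<le> 0"
    proof (rule ereal_le_epsilon2)
      fix e :: real assume e: "0 < e"
      have "(INF m\<in>{k..}. f m) \<le> ereal e" for k
      proof -
        define K where "K = max k (nat \<lceil>1 / e\<rceil>)"
        obtain n where n: "n \<ge> K" "\<forall>i<d. \<forall>j<d. dist ((T^^n) (x i)) ((T^^n) (x j)) < 1 / (real K + 1)"
          using h1 by blast
        have "1 / e \<le> real K" unfolding K_def using real_nat_ceiling_ge[of "1/e"] by linarith
        then have "1 / e < real K + 1" by linarith
        then have "1 < e * (real K + 1)" using e by (simp add: field_simps)
        then have "1 / (real K + 1) < e" by (simp add: field_simps)
        then have "f n \<le> ereal e" using fsmall[OF n(2)] by (meson less_ereal.simps(1) less_trans order.strict_implies_order)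
        moreover have "n \<in> {k..}" using n(1) unfolding K_def by simp
        ultimately show ?thesis by (intro INF_lower2[of n]) auto
      qed
      then show "liminf f \<le> 0 + ereal e" unfolding liminf_SUP_INF by (simp add: SUP_least)
    qed
  qed
  have l2: "limsup g > ereal \<delta>"
  proof -
    have "ereal (2 * \<delta>) \<le> (SUP m\<in>{k..}. g m)" for k
    proof -
      obtain n where "n \<ge> k" "\<forall>i<d. \<forall>j<d. i \<noteq> j \<longrightarrow> dist ((T^^n) (x i)) ((T^^n) (x j)) > 2 * \<delta>"
        using h2 by blast
      then show ?thesis using glarge by (intro SUP_upper2[of n]) (auto intro: less_imp_le)
    qed
    then have "ereal (2 * \<delta>) \<le> limsup g" unfolding limsup_INF_SUP by (simp add: INF_greatest)
    moreover have "ereal \<delta> < ereal (2 * \<delta>)" using dp by simp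
    ultimately show ?thesis by (meson less_le_trans)
  qed
  show ?thesis unfolding li_yorke_tuple_def using l1 l2 unfolding f_def g_def by simp
qed

lemma X_infinite:
  assumes wm: "weakly_mixing X T" and two: "\<exists>x\<in>X. \<exists>y\<in>X. x \<noteq> y"
  shows "infinite X"
proof
  assume fin: "finite X"
  obtain p q where pq: "p \<in> X" "q \<in> X" "p \<noteq> q" using two by blast
  have "closed (X - {p})" using fin by (simp add: finite_imp_closed)
  then have "openin (top_of_set X) (X \<inter> - (X - {p}))" by (intro openin_open_Int open_Compl)
  moreover have "X \<inter> - (X - {p}) = {p}" using pq by auto
  ultimately have o1: "openin (top_of_set X) {p}" by simp
  have "openin (top_of_set X) (X \<inter> - {p})" by (intro openin_open_Int) (simp add: open_Compl)
  then have o2: "openin (top_of_set X) (X - {p})" by (simp add: Diff_eq)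
  have ne: "{p} \<noteq> {}" "X - {p} \<noteq> {}" using pq by auto
  obtain n where "\<exists>v\<in>{p}. (T ^^ n) v \<in> {p}" "\<exists>v\<in>{p}. (T ^^ n) v \<in> X - {p}"
    using wm_pair[OF wm o1 o2 o1 o1 ne(1) ne(2) ne(1) ne(1)] by blast
  then show False by auto
qed

theorem mainTheorem9:
  fixes X :: "'a::metric_space set" and T :: "'a \<Rightarrow> 'a"
  assumes "compact X"
    and "\<exists>x\<in>X. \<exists>y\<in>X. x \<noteq> y"
    and "continuous_on X T" and "T ` X \<subseteq> X"
    and "weakly_mixing X T"
  shows "\<forall>d::nat. d > 1 \<longrightarrow> (\<exists>\<delta>>0.
           residual_in (product_topology (\<lambda>_. top_of_set X) {..<d})
             {x \<in> topspace (product_topology (\<lambda>_. top_of_set X) {..<d}). li_yorke_tuple T d \<delta> x})"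
proof (intro allI impI)
  fix d :: nat assume d: "d > 1"
  let ?P = "product_topology (\<lambda>_. top_of_set X) {..<d}"
  have Xne: "X \<noteq> {}" using assms(2) by blast
  have inf: "infinite X" using X_infinite[OF assms(5,2)] .
  obtain y :: "nat \<Rightarrow> 'a" where y: "inj y" "range y \<subseteq> X" using infinite_countable_subset[OF inf] by blast
  define D where "D = (\<lambda>(i, j). dist (y i) (y j)) ` {(i, j). i < d \<and> j < d \<and> i \<noteq> j}"
  define \<delta> where "\<delta> = Min D / 5"
  have finD: "finite D" unfolding D_def using fin3 by simp
  have "(0::nat, 1::nat) \<in> {(i, j). i < d \<and> j < d \<and> i \<noteq> j}" using d by auto
  then have neD: "D \<noteq> {}" unfolding D_def by blast
  have posD: "\<forall>a\<in>D. a > 0" unfolding D_def using y(1) by (auto simp: inj_eq)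
  have "Min D > 0" using finD neD posD by (subst Min_gr_iff) auto
  then have dp: "\<delta> > 0" unfolding \<delta>_def by simp
  have sep: "dist (y i) (y j) \<ge> 5 * \<delta>" if "i < d" "j < d" "i \<noteq> j" for i j
  proof -
    have "dist (y i) (y j) \<in> D" unfolding D_def using that by force
    then have "Min D \<le> dist (y i) (y j)" using finD by simp
    then show ?thesis unfolding \<delta>_def by simp
  qed
  define c where "c = y 0"
  have cX: "c \<in> X" unfolding c_def using y(2) by blast
  define C1 where "C1 k = X \<inter> ball c (1 / (2 * (real k + 1)))" for k :: nat
  define C2 where "C2 i = X \<inter> ball (y i) \<delta>" for i
  have C1o: "openin (top_of_set X) (C1 k) \<and> C1 k \<noteq> {}" for k
    unfolding C1_def using cX by (auto intro!: openin_open_Int)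
  have C2o: "openin (top_of_set X) (C2 i) \<and> C2 i \<noteq> {}" for i
  proof -
    have "y i \<in> X \<inter> ball (y i) \<delta>" using y(2) dp by auto
    then show ?thesis unfolding C2_def by (auto intro!: openin_open_Int)
  qed
  define O1 where "O1 k = {x \<in> topspace ?P. \<exists>n\<ge>k. \<forall>i<d. (T ^^ n) (x i) \<in> (\<lambda>_. C1 k) i}" for k
  define O2 where "O2 k = {x \<in> topspace ?P. \<exists>n\<ge>k. \<forall>i<d. (T ^^ n) (x i) \<in> C2 i}" for k
  define \<G> where "\<G> = range O1 \<union> range O2"
  have Gprop: "openin ?P U \<and> ?P closure_of U = topspace ?P" if "U \<in> \<G>" for U
  proof -
    from that consider k where "U = O1 k" | k where "U = O2 k" unfolding \<G>_def by blast
    then show ?thesis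
    proof cases
      case 1
      then show ?thesis unfolding O1_def
        using open_O[OF assms(3,4), of d "\<lambda>_. C1 k" k] dense_O[OF assms(3,4,5) Xne assms(1), of d "\<lambda>_. C1 k" k] C1o
        by blast
    next
      case 2
      then show ?thesis unfolding O2_def
        using open_O[OF assms(3,4), of d C2 k] dense_O[OF assms(3,4,5) Xne assms(1), of d C2 k] C2o
        by blast
    qed
  qed
  have cs: "compact_space (top_of_set X)" using assms(1) by (simp add: compact_space_subtopology)
  have hs: "Hausdorff_space (top_of_set X)" by (simp add: Hausdorff_space_subtopology)
  have cP: "compact_space ?P" using cs by (simp add: compact_space_product_topology)
  have hP: "Hausdorff_space ?P" using hs by (simp add: Hausdorff_space_product_topology)
  have dense: "?P closure_of \<Inter>\<G> = topspace ?P"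
  proof (rule Baire_category)
    show "completely_metrizable_space ?P \<or> locally_compact_space ?P \<and> regular_space ?P"
      using cP hP compact_imp_locally_compact_space compact_Hausdorff_imp_regular_space by blast
    show "countable \<G>" unfolding \<G>_def by simp
  qed (use Gprop in blast)+
  have sub: "\<Inter>\<G> \<subseteq> topspace ?P" unfolding \<G>_def O1_def by auto
  have gd: "gdelta_in ?P (\<Inter>\<G>)"
  proof -
    have "countable \<G>" unfolding \<G>_def by simp
    moreover have "\<G> \<subseteq> Collect (openin ?P)" using Gprop by blast
    ultimately have "(countable intersection_of openin ?P) (\<Inter>\<G>)"
      unfolding intersection_of_def by blast
    then show ?thesis unfolding gdelta_in_alt using sub by blast
  qed
  have ly_in: "li_yorke_tuple T d \<delta> x" if "x \<in> \<Inter>\<G>" for x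
  proof (rule ly[OF d dp])
    fix k
    have "x \<in> O1 k" using that unfolding \<G>_def by auto
    then obtain n where n: "n \<ge> k" "\<forall>i<d. (T ^^ n) (x i) \<in> C1 k" unfolding O1_def by auto
    have "dist ((T^^n) (x i)) ((T^^n) (x j)) < 1 / (real k + 1)" if "i < d" "j < d" for i j
    proof -
      have f1: "dist c ((T^^n) (x i)) < 1 / (2 * (real k + 1))" and f2: "dist c ((T^^n) (x j)) < 1 / (2 * (real k + 1))"
        using n(2) that unfolding C1_def by auto
      have f3: "dist ((T^^n) (x i)) ((T^^n) (x j)) \<le> dist c ((T^^n) (x i)) + dist c ((T^^n) (x j))"
        by (rule dist_triangle3)
      have eq: "1 / (2 * (real k + 1)) + 1 / (2 * (real k + 1)) = 1 / (real k + 1)"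
        by (simp add: field_simps)
      have "dist c ((T^^n) (x i)) + dist c ((T^^n) (x j)) < 1 / (2 * (real k + 1)) + 1 / (2 * (real k + 1))"
        using f1 f2 by (rule add_strict_mono)
      with f3 have "dist ((T^^n) (x i)) ((T^^n) (x j)) < 1 / (2 * (real k + 1)) + 1 / (2 * (real k + 1))"
        by (rule le_less_trans)
      then show ?thesis unfolding eq .
    qed
    then show "\<exists>n\<ge>k. \<forall>i<d. \<forall>j<d. dist ((T^^n) (x i)) ((T^^n) (x j)) < 1 / (real k + 1)"
      using n(1) by blast
  next
    fix k
    have "x \<in> O2 k" using that unfolding \<G>_def by auto
    then obtain n where n: "n \<ge> k" "\<forall>i<d. (T ^^ n) (x i) \<in> C2 i" unfolding O2_def by auto
    have "dist ((T^^n) (x i)) ((T^^n) (x j)) > 2 * \<delta>" if "i < d" "j < d" "i \<noteq> j" for i j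
    proof -
      have a: "dist (y i) ((T^^n) (x i)) < \<delta>" "dist (y j) ((T^^n) (x j)) < \<delta>"
        using n(2) that unfolding C2_def by auto
      have b: "dist (y i) (y j) \<le> dist (y i) ((T^^n) (x i)) + dist ((T^^n) (x i)) (y j)"
        by (rule dist_triangle)
      have c: "dist ((T^^n) (x i)) (y j) \<le> dist ((T^^n) (x i)) ((T^^n) (x j)) + dist (y j) ((T^^n) (x j))"
        by (rule dist_triangle2)
      show ?thesis using a b c sep[OF that] dp by linarith
    qed
    then show "\<exists>n\<ge>k. \<forall>i<d. \<forall>j<d. i \<noteq> j \<longrightarrow> dist ((T^^n) (x i)) ((T^^n) (x j)) > 2 * \<delta>"
      using n(1) by blast
  qed
  show "\<exists>\<delta>>0. residual_in ?P {x \<in> topspace ?P. li_yorke_tuple T d \<delta> x}"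
    unfolding residual_in_def
    using dp gd dense sub ly_in by blast
qed

end
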